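(* Let $L^n_{\mathbb{C}}$ be the set of all $A\in M_n(\mathbb{C})$ such that the Schur map $S_A(B)=A\circ B$ on $M_n(\mathbb{C})$ is nonzero and multiplicative, regarded as a group under the Schur product, and let $(L^n_{\mathbb{C}})^{+}$ be the subgroup of those $A\in L^n_{\mathbb{C}}$ that are positive matrices. Then $L^n_{\mathbb{C}}$ is a complex Lie group of complex dimension $n-1$, and $(L^n_{\mathbb{C}})^{+}$ is a compact Lie group isomorphic (as a topological group) to the $(n-1)$-torus $\mathbb{T}^{n-1}$.
   Context: $A\circ B=(a_{ij}b_{ij})$ is the entrywise product; multiplicative means $S_A(BC)=S_A(B)S_A(C)$. A positive matrix is a Hermitian matrix with nonnegative spectrum. $\mathbb{T}$ is the circle group of complex numbers of modulus one. The topology is the one inherited from $M_n(\mathbb{C})$. *)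

theory Defs
  imports "HOL-Analysis.Analysis" "HOL-Algebra.Group"
begin

definition schur :: "complex^'n^'n \<Rightarrow> complex^'n^'n \<Rightarrow> complex^'n^'n" where
  "schur A B = (\<chi> i j. A $ i $ j * B $ i $ j)"

definition schur_multiplicative :: "complex^'n^'n \<Rightarrow> bool" where
  "schur_multiplicative A \<longleftrightarrow> (\<forall>B C. schur A (B ** C) = schur A B ** schur A C)"

definition Lset :: "(complex^'n^'n) set" where
  "Lset = {A. (\<exists>B. schur A B \<noteq> 0) \<and> schur_multiplicative A}"

definition positive_matrix :: "complex^'n^'n \<Rightarrow> bool" where
  "positive_matrix A \<longleftrightarrow> (\<forall>i j. A $ j $ i = cnj (A $ i $ j)) \<and>
     (\<forall>c v. v \<noteq> 0 \<and> A *v v = c *s v \<longrightarrow> c \<in> \<real> \<and> 0 \<le> Re c)"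

definition Lpos :: "(complex^'n^'n) set" where
  "Lpos = {A \<in> Lset. positive_matrix A}"

definition schur_one :: "complex^'n^'n" where
  "schur_one = (\<chi> i j. 1)"

definition schur_group :: "(complex^'n^'n) monoid" where
  "schur_group = \<lparr>carrier = Lset, mult = schur, one = schur_one\<rparr>"

text \<open>(C^*)^m and T^m, as functions nat => complex supported on {..<m}
  (with the product topology, this is the usual topology of C^m).\<close>
definition Cstar_pow :: "nat \<Rightarrow> (nat \<Rightarrow> complex) set" where
  "Cstar_pow m = {x. (\<forall>i<m. x i \<noteq> 0) \<and> (\<forall>i\<ge>m. x i = 0)}"

definition torus_pow :: "nat \<Rightarrow> (nat \<Rightarrow> complex) set" where
  "torus_pow m = {x. (\<forall>i<m. norm (x i) = 1) \<and> (\<forall>i\<ge>m. x i = 0)}"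

definition pmult :: "(nat \<Rightarrow> complex) \<Rightarrow> (nat \<Rightarrow> complex) \<Rightarrow> nat \<Rightarrow> complex" where
  "pmult x y = (\<lambda>i. x i * y i)"

end

theory Submission
  imports Defs
begin

definition cocyc :: "complex^'n^'n \<Rightarrow> bool" where
  "cocyc A \<longleftrightarrow> (\<forall>i j k. A$i$j = A$i$k * A$k$j) \<and> (\<forall>i. A$i$i = 1)"

lemma schur_nth[simp]: "schur A B $ i $ j = A$i$j * B$i$j"
  by (simp add: schur_def)

lemma Lset_imp_cocyc:
  fixes A :: "complex^'n::finite^'n"
  assumes "A \<in> Lset" shows "cocyc A"
proof -
  from assms obtain B where B: "schur A B \<noteq> 0" and M: "schur_multiplicative A"
    by (auto simp: Lset_def)
  have coc: "A$i$j = A$i$k * A$k$j" for i j k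
  proof -
    define E1 :: "complex^'n^'n" where "E1 = (\<chi> p q. if p = i \<and> q = k then 1 else 0)"
    define E2 :: "complex^'n^'n" where "E2 = (\<chi> p q. if p = k \<and> q = j then 1 else 0)"
    have "schur A (E1 ** E2) $ i $ j = (schur A E1 ** schur A E2) $ i $ j"
      using M by (simp add: schur_multiplicative_def)
    then show ?thesis
      by (simp add: matrix_matrix_mult_def E1_def E2_def if_distrib cong: if_cong)
  qed
  obtain p q where pq: "A$p$q \<noteq> 0"
  proof -
    have "\<exists>p q. A$p$q \<noteq> 0"
    proof (rule ccontr)
      assume "\<not> ?thesis"
      then have "schur A B = 0" by (simp add: vec_eq_iff schur_def)
      with B show False by simp
    qed
    then show ?thesis using that by blast
  qed
  have pp: "A$p$p = 1" using coc[of p q p] pq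
    by (metis mult_cancel_right2)
  have "A$i$i = 1" for i
  proof -
    have "A$p$i * A$i$p = 1" using coc[of p p i] pp by simp
    then have "A$p$i \<noteq> 0" by auto
    moreover have "A$p$i = A$p$i * A$i$i" using coc[of p i i] .
    ultimately show ?thesis by (metis mult_cancel_left1)
  qed
  with coc show ?thesis by (simp add: cocyc_def)
qed

lemma cocyc_imp_Lset:
  fixes A :: "complex^'n::finite^'n"
  assumes "cocyc A" shows "A \<in> Lset"
proof -
  have c: "A$i$j = A$i$k * A$k$j" "A$i$i = 1" for i j k using assms by (auto simp: cocyc_def)
  have "schur A schur_one \<noteq> 0"
  proof
    assume "schur A schur_one = 0"
    then have "schur A schur_one $ i $ i = 0" for i by simp
    then show False using c by (simp add: schur_one_def)
  qed
  moreover have "schur_multiplicative A"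
    unfolding schur_multiplicative_def
  proof (intro allI)
    fix B C :: "complex^'n^'n"
    show "schur A (B ** C) = schur A B ** schur A C"
      unfolding vec_eq_iff
      by (auto simp: matrix_matrix_mult_def sum_distrib_left intro!: sum.cong)
        (metis c(1) mult.assoc mult.left_commute)
  qed
  ultimately show ?thesis by (auto simp: Lset_def)
qed

lemma Lset_iff: "(A::complex^'n::finite^'n) \<in> Lset \<longleftrightarrow> cocyc A"
  using Lset_imp_cocyc cocyc_imp_Lset by blast


lemma cocyc_inv: "cocyc A \<Longrightarrow> A$i$j * A$j$i = 1"
  unfolding cocyc_def by metis

lemma inv_uniq: "(a::complex)*b=1 \<Longrightarrow> a*c=1 \<Longrightarrow> b=c"
  by (metis mult.assoc mult.commute mult_1_right)

lemma norm1_cnj: "norm (a::complex) = 1 \<Longrightarrow> a * cnj a = 1"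
  by (metis complex_norm_square mult.commute norm_one of_real_1 power_one)

lemma Lpos_iff:
  fixes A :: "complex^'n::finite^'n"
  shows "A \<in> Lpos \<longleftrightarrow> cocyc A \<and> (\<forall>i j. norm (A$i$j) = 1)"
proof
  assume "A \<in> Lpos"
  then have c: "cocyc A" and h: "\<And>i j. A $ j $ i = cnj (A $ i $ j)"
    unfolding Lpos_def Lset_iff positive_matrix_def by blast+
  have "norm (A$i$j) = 1" for i j
  proof -
    have "A$i$j * cnj (A$i$j) = 1" using cocyc_inv[OF c, of i j] h[of i j] by simp
    then have "(norm (A$i$j))^2 = 1"
      by (metis complex_norm_square of_real_eq_1_iff)
    then show ?thesis by (simp add: power2_eq_1_iff) (smt (verit) norm_ge_zero)
  qed
  with c show "cocyc A \<and> (\<forall>i j. norm (A$i$j) = 1)" by blast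
next
  assume as: "cocyc A \<and> (\<forall>i j. norm (A$i$j) = 1)"
  then have c: "cocyc A" and n1: "\<And>i j. norm (A$i$j) = 1" by auto
  have cc: "A$i$j = A$i$k * A$k$j" for i j k using c by (auto simp: cocyc_def)
  have herm: "A $ j $ i = cnj (A $ i $ j)" for i j
  proof -
    have "A$i$j * A$j$i = 1" "A$i$j * cnj (A$i$j) = 1" using cocyc_inv[OF c] norm1_cnj[OF n1] by auto
    then show ?thesis using inv_uniq by blast
  qed
  have eig: "c \<in> \<real> \<and> 0 \<le> Re c" if v: "v \<noteq> 0" and e: "A *v v = c *s v" for c v
  proof -
    obtain p :: 'n where True by simp
    define s where "s = (\<Sum>k\<in>UNIV. A$p$k * v$k)"
    have Av: "(A *v v)$i = A$i$p * s" for i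
    proof -
      have h: "A$i$k * v$k = A$i$p * (A$p$k * v$k)" for k
        by (subst cc[of i k p]) (simp add: mult.assoc)
      show ?thesis
        unfolding matrix_vector_mult_def s_def sum_distrib_left vec_lambda_beta
        by (rule sum.cong[OF refl h])
    qed
    have cv: "c * v$i = A$i$p * s" for i using Av[of i] e by (simp add: vec_eq_iff)
    have "c * s = (\<Sum>j\<in>UNIV. A$p$j * (c * v$j))"
      by (simp add: s_def sum_distrib_left mult.left_commute)
    also have "\<dots> = (\<Sum>j\<in>(UNIV::'n set). s)"
      by (simp add: cv mult.assoc[symmetric] cocyc_inv[OF c])
    also have "\<dots> = of_nat CARD('n) * s" by simp
    finally have cs: "c * s = of_nat CARD('n) * s" .
    show ?thesis
    proof (cases "s = 0")
      case True
      then have "c * v$i = 0" for i using cv by simp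
      then have "c = 0" using v by (metis mult_eq_0_iff vec_eq_iff zero_index)
      then show ?thesis by simp
    next
      case False
      then have "c = of_nat CARD('n)" using cs by simp
      then show ?thesis by simp
    qed
  qed
  show "A \<in> Lpos"
    unfolding Lpos_def Lset_iff positive_matrix_def using c herm eig by blast
qed


lemma cocyc_schur: "cocyc A \<Longrightarrow> cocyc B \<Longrightarrow> cocyc (schur A B)"
  unfolding cocyc_def by (simp add: mult_ac)

lemma cocyc_one: "cocyc (schur_one :: complex^'n^'n)"
  by (simp add: cocyc_def schur_one_def)

lemma cocyc_tr: "cocyc A \<Longrightarrow> cocyc (\<chi> i j. A$j$i)"
  unfolding cocyc_def by (simp add: mult.commute)

lemma schur_assoc: "schur (schur A B) C = schur A (schur B C)"
  by (simp add: vec_eq_iff mult.assoc)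

lemma schur_one_left: "schur schur_one A = A"
  by (simp add: vec_eq_iff schur_one_def)

lemma schur_tr: "cocyc A \<Longrightarrow> schur (\<chi> i j. A$j$i) A = schur_one"
  by (simp add: vec_eq_iff schur_one_def mult.commute cocyc_inv)

lemma group_schur: "group (schur_group :: (complex^'n::finite^'n) monoid)"
proof (rule groupI)
  fix x :: "complex^'n^'n"
  assume x: "x \<in> carrier schur_group"
  then have c: "cocyc x" by (simp add: schur_group_def Lset_iff)
  show "\<exists>y\<in>carrier schur_group. y \<otimes>\<^bsub>schur_group\<^esub> x = \<one>\<^bsub>schur_group\<^esub>"
    by (rule bexI[of _ "\<chi> i j. x$j$i"])
      (simp_all add: schur_group_def Lset_iff schur_tr[OF c] cocyc_tr[OF c])
qed (auto simp: schur_group_def Lset_iff cocyc_schur cocyc_one schur_assoc schur_one_left)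

lemma subgroup_Lpos: "subgroup (Lpos :: (complex^'n::finite^'n) set) schur_group"
proof (rule group.subgroupI[OF group_schur])
  show "Lpos \<subseteq> carrier (schur_group :: (complex^'n::finite^'n) monoid)"
    by (auto simp: schur_group_def Lpos_def)
  show "(Lpos :: (complex^'n::finite^'n) set) \<noteq> {}"
  proof -
    have "schur_one \<in> (Lpos :: (complex^'n::finite^'n) set)"
      using cocyc_one by (simp add: Lpos_iff schur_one_def)
    then show ?thesis by blast
  qed
next
  fix a :: "complex^'n^'n" assume a: "a \<in> Lpos"
  then have c: "cocyc a" and n: "\<forall>i j. norm (a$i$j) = 1" by (auto simp: Lpos_iff)
  have "inv\<^bsub>schur_group\<^esub> a = (\<chi> i j. a$j$i)"
    by (rule group.inv_equality[OF group_schur])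
      (simp_all add: schur_group_def Lset_iff schur_tr[OF c] cocyc_tr[OF c] c)
  then show "inv\<^bsub>schur_group\<^esub> a \<in> Lpos"
    using c n by (simp add: Lpos_iff cocyc_tr)
next
  fix a b :: "complex^'n^'n" assume "a \<in> Lpos" "b \<in> Lpos"
  then show "a \<otimes>\<^bsub>schur_group\<^esub> b \<in> Lpos"
    by (auto simp: Lpos_iff schur_group_def cocyc_schur norm_mult)
qed

lemma norm_vec_le: "norm (x::'a::real_normed_vector^'n::finite) \<le> (\<Sum>i\<in>UNIV. norm (x$i))"
  by (simp add: norm_vec_def L2_set_le_sum)

lemma compact_Lpos: "compact (Lpos :: (complex^'n::finite^'n) set)"
proof -
  have eq: "(Lpos :: (complex^'n::finite^'n) set) = {A. (\<forall>i j k. A$i$j = A$i$k * A$k$j) \<and> (\<forall>i. A$i$i = 1)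
     \<and> (\<forall>i j. norm (A$i$j) = 1)}"
    by (auto simp: Lpos_iff cocyc_def)
  have cl: "closed (Lpos :: (complex^'n::finite^'n) set)"
    unfolding eq
    by (intro closed_Collect_conj closed_Collect_all closed_Collect_eq continuous_intros continuous_on_id)
  have "norm A \<le> of_nat (CARD('n) * CARD('n))" if "A \<in> (Lpos :: (complex^'n::finite^'n) set)" for A
  proof -
    have n: "norm (A$i$j) = 1" for i j using that by (auto simp: Lpos_iff)
    have "norm A \<le> (\<Sum>i\<in>UNIV. norm (A$i))" by (rule norm_vec_le)
    also have "\<dots> \<le> (\<Sum>i\<in>(UNIV::'n set). (\<Sum>j\<in>(UNIV::'n set). norm (A$i$j)))"
      by (intro sum_mono norm_vec_le)
    also have "\<dots> = of_nat (CARD('n) * CARD('n))" by (simp add: n)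
    finally show ?thesis .
  qed
  then have "bounded (Lpos :: (complex^'n::finite^'n) set)"
    unfolding bounded_iff by blast
  with cl show ?thesis by (simp add: compact_eq_bounded_closed)
qed


definition gidx :: "(nat \<Rightarrow> 'n::finite) \<Rightarrow> 'n \<Rightarrow> nat" where
  "gidx f i = inv_into {..<CARD('n)} f i"

definition yv :: "(nat \<Rightarrow> 'n::finite) \<Rightarrow> (nat \<Rightarrow> complex) \<Rightarrow> 'n \<Rightarrow> complex" where
  "yv f x i = (if gidx f i < CARD('n) - 1 then x (gidx f i) else 1)"

definition phi :: "(nat \<Rightarrow> 'n::finite) \<Rightarrow> (nat \<Rightarrow> complex) \<Rightarrow> complex^'n^'n" where
  "phi f x = (\<chi> i j. yv f x i / yv f x j)"

definition psi :: "(nat \<Rightarrow> 'n::finite) \<Rightarrow> complex^'n^'n \<Rightarrow> nat \<Rightarrow> complex" where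
  "psi f A = (\<lambda>k. if k < CARD('n) - 1 then A $ f k $ f (CARD('n) - 1) else 0)"

lemma gidx_props:
  fixes f :: "nat \<Rightarrow> 'n::finite"
  assumes bf: "bij_betw f {..<CARD('n)} UNIV"
  shows "gidx f i < CARD('n)" "f (gidx f i) = i" "k < CARD('n) \<Longrightarrow> gidx f (f k) = k"
proof -
  show "gidx f i < CARD('n)" unfolding gidx_def
    using bij_betwE[OF bij_betw_inv_into[OF bf]] by blast
  show "f (gidx f i) = i" unfolding gidx_def
    using bij_betw_inv_into_right[OF bf] by blast
  show "k < CARD('n) \<Longrightarrow> gidx f (f k) = k" unfolding gidx_def
    using bf by (simp add: bij_betw_inv_into_left)
qed

lemma card_pos': "CARD('n::finite) - 1 < CARD('n)"
  by (simp add: finite_UNIV_card_ge_0)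

lemma gidx_last:
  fixes f :: "nat \<Rightarrow> 'n::finite"
  assumes bf: "bij_betw f {..<CARD('n)} UNIV" and "\<not> gidx f i < CARD('n) - 1"
  shows "i = f (CARD('n) - 1)"
proof -
  have "gidx f i = CARD('n) - 1" using gidx_props(1)[OF bf, of i] assms(2) by linarith
  then show ?thesis using gidx_props(2)[OF bf, of i] by simp
qed

lemma yv_nz:
  fixes f :: "nat \<Rightarrow> 'n::finite"
  assumes "x \<in> Cstar_pow (CARD('n) - 1)" shows "yv f x i \<noteq> 0"
  using assms by (simp add: yv_def Cstar_pow_def)

lemma yv_norm:
  fixes f :: "nat \<Rightarrow> 'n::finite"
  assumes "x \<in> torus_pow (CARD('n) - 1)" shows "norm (yv f x i) = 1"
  using assms by (simp add: yv_def torus_pow_def)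

lemma torus_sub: "torus_pow m \<subseteq> Cstar_pow m"
  by (auto simp: torus_pow_def Cstar_pow_def)

lemma phi_cocyc:
  fixes f :: "nat \<Rightarrow> 'n::finite"
  assumes "x \<in> Cstar_pow (CARD('n) - 1)" shows "cocyc (phi f x)"
  using yv_nz[OF assms, of f] by (simp add: cocyc_def phi_def)

lemma phi_mult: "phi f (pmult x y) = schur (phi f x) (phi f y)"
  by (simp add: vec_eq_iff phi_def yv_def pmult_def)

lemma psi_phi:
  fixes f :: "nat \<Rightarrow> 'n::finite"
  assumes bf: "bij_betw f {..<CARD('n)} UNIV" and x: "x \<in> Cstar_pow (CARD('n) - 1)"
  shows "psi f (phi f x) = x"
proof
  fix k
  show "psi f (phi f x) k = x k"
  proof (cases "k < CARD('n) - 1")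
    case True
    then show ?thesis
      using gidx_props(3)[OF bf, of k] gidx_props(3)[OF bf, OF card_pos']
      by (simp add: psi_def phi_def yv_def)
  next
    case False
    then show ?thesis using x by (simp add: psi_def Cstar_pow_def)
  qed
qed

lemma yv_psi:
  fixes f :: "nat \<Rightarrow> 'n::finite"
  assumes bf: "bij_betw f {..<CARD('n)} UNIV" and c: "cocyc A"
  shows "yv f (psi f A) i = A $ i $ f (CARD('n) - 1)"
proof (cases "gidx f i < CARD('n) - 1")
  case True
  then show ?thesis using gidx_props(2)[OF bf, of i] by (simp add: yv_def psi_def)
next
  case False
  then show ?thesis using gidx_last[OF bf False] c by (simp add: yv_def cocyc_def)
qed

lemma phi_psi:
  fixes f :: "nat \<Rightarrow> 'n::finite"
  assumes bf: "bij_betw f {..<CARD('n)} UNIV" and c: "cocyc A"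
  shows "phi f (psi f A) = A"
proof -
  let ?p = "f (CARD('n) - 1)"
  have "A$i$?p / A$j$?p = A$i$j" for i j
  proof -
    have "A$i$j = A$i$?p * A$?p$j" using c by (simp add: cocyc_def)
    moreover have h: "A$?p$j * A$j$?p = 1" using cocyc_inv[OF c] .
    then have "A$j$?p \<noteq> 0" by auto
    with h have "A$?p$j = 1 / A$j$?p" by (simp add: eq_divide_eq)
    ultimately show ?thesis by simp
  qed
  then show ?thesis by (simp add: vec_eq_iff phi_def yv_psi[OF bf c])
qed

lemma psi_Cstar:
  fixes f :: "nat \<Rightarrow> 'n::finite"
  assumes c: "cocyc A" shows "psi f A \<in> Cstar_pow (CARD('n) - 1)"
proof -
  have "A $ a $ b \<noteq> 0" for a b using cocyc_inv[OF c, of a b] by auto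
  then show ?thesis by (simp add: psi_def Cstar_pow_def)
qed

lemma psi_torus:
  fixes f :: "nat \<Rightarrow> 'n::finite"
  assumes "A \<in> Lpos" shows "psi f A \<in> torus_pow (CARD('n) - 1)"
  using assms by (simp add: psi_def torus_pow_def Lpos_iff)

lemma phi_torus:
  fixes f :: "nat \<Rightarrow> 'n::finite"
  assumes x: "x \<in> torus_pow (CARD('n) - 1)" shows "phi f x \<in> Lpos"
  using yv_norm[OF x, of f] phi_cocyc[of x f] torus_sub x
  by (auto simp: Lpos_iff phi_def norm_divide)

lemma cont_yv:
  fixes f :: "nat \<Rightarrow> 'n::finite"
  shows "continuous_on S (\<lambda>x. yv f x i)"
  unfolding yv_def
  by (cases "gidx f i < CARD('n) - 1")
     (auto intro: continuous_on_subset[OF continuous_on_product_coordinates])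

lemma cont_phi:
  fixes f :: "nat \<Rightarrow> 'n::finite"
  shows "continuous_on (Cstar_pow (CARD('n) - 1)) (phi f)"
  unfolding phi_def
  by (intro continuous_on_vec_lambda continuous_on_divide cont_yv) (simp add: yv_nz)

lemma cont_psi:
  fixes f :: "nat \<Rightarrow> 'n::finite"
  shows "continuous_on S (psi f)"
  unfolding psi_def
proof (intro continuous_on_coordinatewise_then_product)
  fix k
  show "continuous_on S (\<lambda>A. if k < CARD('n) - 1 then A $ f k $ f (CARD('n) - 1) else 0)"
    by (cases "k < CARD('n) - 1") (auto intro!: continuous_intros)
qed

lemma holo_phi:
  fixes f :: "nat \<Rightarrow> 'n::finite"
  assumes x: "x \<in> Cstar_pow (CARD('n) - 1)" and k: "k < CARD('n) - 1"
  shows "(\<lambda>z. phi f (x(k := z)) $ i $ j) holomorphic_on {z. z \<noteq> 0}"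
proof -
  have h: "(\<lambda>z. yv f (x(k := z)) a) holomorphic_on {z. z \<noteq> 0} \<and>
        (\<forall>z\<in>{z. z \<noteq> 0}. yv f (x(k := z)) a \<noteq> 0)" for a
    using x k unfolding yv_def Cstar_pow_def
    by (cases "gidx f a < CARD('n) - 1"; cases "gidx f a = k") auto
  show ?thesis unfolding phi_def vec_lambda_beta
    using h[of i] h[of j] by (intro holomorphic_on_divide) auto
qed


theorem proposition3p3:
  shows "group (schur_group :: (complex^'n::finite^'n) monoid)
    \<and> subgroup (Lpos :: (complex^'n^'n) set) schur_group
    \<and> (\<exists>\<phi> \<psi>. homeomorphism (Cstar_pow (CARD('n) - 1)) (Lset :: (complex^'n^'n) set) \<phi> \<psi>
          \<and> (\<forall>x\<in>Cstar_pow (CARD('n) - 1). \<forall>y\<in>Cstar_pow (CARD('n) - 1).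
                \<phi> (pmult x y) = schur (\<phi> x) (\<phi> y))
          \<and> (\<forall>x\<in>Cstar_pow (CARD('n) - 1). \<forall>k<CARD('n) - 1. \<forall>i j.
                (\<lambda>z. \<phi> (x(k := z)) $ i $ j) holomorphic_on {z. z \<noteq> 0}))
    \<and> compact (Lpos :: (complex^'n^'n) set)
    \<and> (\<exists>\<phi> \<psi>. homeomorphism (torus_pow (CARD('n) - 1)) (Lpos :: (complex^'n^'n) set) \<phi> \<psi>
          \<and> (\<forall>x\<in>torus_pow (CARD('n) - 1). \<forall>y\<in>torus_pow (CARD('n) - 1).
                \<phi> (pmult x y) = schur (\<phi> x) (\<phi> y)))"
proof -
  obtain f :: "nat \<Rightarrow> 'n" where bf: "bij_betw f {..<CARD('n)} UNIV"
    using ex_bij_betw_nat_finite[of "UNIV::'n set"] by (auto simp: atLeast0LessThan)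
  have h1: "homeomorphism (Cstar_pow (CARD('n) - 1)) (Lset :: (complex^'n^'n) set) (phi f) (psi f)"
  proof (rule homeomorphismI)
    show "continuous_on (Cstar_pow (CARD('n) - 1)) (phi f)" by (rule cont_phi)
    show "continuous_on Lset (psi f)" by (rule cont_psi)
    show "phi f ` Cstar_pow (CARD('n) - 1) \<subseteq> Lset" using phi_cocyc by (auto simp: Lset_iff)
    show "psi f ` Lset \<subseteq> Cstar_pow (CARD('n) - 1)" using psi_Cstar by (auto simp: Lset_iff)
    show "psi f (phi f x) = x" if "x \<in> Cstar_pow (CARD('n) - 1)" for x
      using psi_phi[OF bf that] .
    show "phi f (psi f y) = y" if "y \<in> Lset" for y
      using phi_psi[OF bf] that by (simp add: Lset_iff)
  qed
  have h2: "homeomorphism (torus_pow (CARD('n) - 1)) (Lpos :: (complex^'n^'n) set) (phi f) (psi f)"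
  proof (rule homeomorphismI)
    show "continuous_on (torus_pow (CARD('n) - 1)) (phi f)"
      by (rule continuous_on_subset[OF cont_phi torus_sub])
    show "continuous_on Lpos (psi f)" by (rule cont_psi)
    show "phi f ` torus_pow (CARD('n) - 1) \<subseteq> Lpos" using phi_torus by auto
    show "psi f ` Lpos \<subseteq> torus_pow (CARD('n) - 1)" using psi_torus by auto
    show "psi f (phi f x) = x" if "x \<in> torus_pow (CARD('n) - 1)" for x
      using psi_phi[OF bf] that torus_sub by blast
    show "phi f (psi f y) = y" if "y \<in> Lpos" for y
      using phi_psi[OF bf] that by (simp add: Lpos_iff)
  qed
  have e1: "\<exists>\<phi> \<psi>. homeomorphism (Cstar_pow (CARD('n) - 1)) (Lset :: (complex^'n^'n) set) \<phi> \<psi>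
          \<and> (\<forall>x\<in>Cstar_pow (CARD('n) - 1). \<forall>y\<in>Cstar_pow (CARD('n) - 1).
                \<phi> (pmult x y) = schur (\<phi> x) (\<phi> y))
          \<and> (\<forall>x\<in>Cstar_pow (CARD('n) - 1). \<forall>k<CARD('n) - 1. \<forall>i j.
                (\<lambda>z. \<phi> (x(k := z)) $ i $ j) holomorphic_on {z. z \<noteq> 0})"
    using h1 phi_mult holo_phi by blast
  have e2: "\<exists>\<phi> \<psi>. homeomorphism (torus_pow (CARD('n) - 1)) (Lpos :: (complex^'n^'n) set) \<phi> \<psi>
          \<and> (\<forall>x\<in>torus_pow (CARD('n) - 1). \<forall>y\<in>torus_pow (CARD('n) - 1).
                \<phi> (pmult x y) = schur (\<phi> x) (\<phi> y))"
    using h2 phi_mult by blast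
  show ?thesis using group_schur subgroup_Lpos compact_Lpos e1 e2 by blast
qed

end
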